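(* Let $\{f_i\}_{i\in I}$ be a Parseval frame for a Hilbert space $\mathbb H$. Then for every subset $J\subset I$ and every $f\in\mathbb H$, $$\sum_{i\in J}|\langle f,f_i\rangle|^2-\Big\|\sum_{i\in J}\langle f,f_i\rangle f_i\Big\|^2=\sum_{i\in J^c}|\langle f,f_i\rangle|^2-\Big\|\sum_{i\in J^c}\langle f,f_i\rangle f_i\Big\|^2,$$ where $J^c=I\setminus J$.
   Context: A family $\{f_i\}_{i\in I}$ in a Hilbert space $\mathbb H$ is a Parseval frame if $\sum_{i\in I}|\langle f,f_i\rangle|^2=\|f\|^2$ for all $f\in\mathbb H$. *)

theory Defs
  imports "HOL-Analysis.Analysis"
begin

text \<open>Complex Hilbert spaces: the distribution only provides real inner product
spaces, so we introduce a class of complex inner product spaces that are complete.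
The inner product is linear in the first argument and conjugate linear in the second.\<close>

class complex_hilbert = real_normed_vector + complete_space +
  fixes scaleC :: "complex \<Rightarrow> 'a \<Rightarrow> 'a"
    and cinner :: "'a \<Rightarrow> 'a \<Rightarrow> complex"
  assumes scaleC_add_right: "scaleC a (x + y) = scaleC a x + scaleC a y"
    and scaleC_add_left: "scaleC (a + b) x = scaleC a x + scaleC b x"
    and scaleC_scaleC: "scaleC a (scaleC b x) = scaleC (a * b) x"
    and scaleC_one: "scaleC 1 x = x"
    and scaleR_scaleC: "scaleR r x = scaleC (complex_of_real r) x"
    and cinner_commute: "cinner x y = cnj (cinner y x)"
    and cinner_add_left: "cinner (x + y) z = cinner x z + cinner y z"
    and cinner_scaleC_left: "cinner (scaleC a x) y = a * cinner x y"
    and cinner_self_real: "Im (cinner x x) = 0"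
    and cinner_self_nonneg: "0 \<le> Re (cinner x x)"
    and cinner_self_eq_zero: "cinner x x = 0 \<longleftrightarrow> x = 0"
    and norm_eq_sqrt_cinner: "norm x = sqrt (Re (cinner x x))"

definition parseval_frame :: "'i set \<Rightarrow> ('i \<Rightarrow> 'a::complex_hilbert) \<Rightarrow> bool" where
  "parseval_frame I F \<longleftrightarrow>
     (\<forall>f::'a. ((\<lambda>i. (cmod (cinner f (F i)))^2) has_sum (norm f)^2) I)"

end

theory Submission
  imports Defs
begin

lemma cauchy_summable:
  fixes f :: "'i \<Rightarrow> 'b::banach"
  assumes H: "\<And>e. e > 0 \<Longrightarrow> \<exists>F0. finite F0 \<and> F0 \<subseteq> A \<and> (\<forall>G. finite G \<and> G \<subseteq> A - F0 \<longrightarrow> norm (sum f G) < e)"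
  shows "f summable_on A"
proof -
  have "\<exists>P. eventually P (finite_subsets_at_top A) \<and>
              (\<forall>F F'. P F \<and> P F' \<longrightarrow> dist (sum f F) (sum f F') < e)" if "e>0" for e
  proof -
    obtain F0 where F0: "finite F0" "F0 \<subseteq> A" "\<And>G. finite G \<Longrightarrow> G \<subseteq> A - F0 \<Longrightarrow> norm (sum f G) < e/2"
      using H[of "e/2"] \<open>e>0\<close> by auto
    define P where "P F \<longleftrightarrow> finite F \<and> F0 \<subseteq> F \<and> F \<subseteq> A" for F
    have ev: "eventually P (finite_subsets_at_top A)"
      unfolding eventually_finite_subsets_at_top P_def using F0 by auto
    moreover have "dist (sum f F1) (sum f F2) < e" if "P F1" "P F2" for F1 F2
    proof -
      have e1: "sum f F1 = sum f (F1 - F2) + sum f (F1 \<inter> F2)"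
        using that unfolding P_def using sum.Int_Diff[of F1 f F2] by (simp add: add.commute)
      have e2: "sum f F2 = sum f (F2 - F1) + sum f (F1 \<inter> F2)"
        using that unfolding P_def using sum.Int_Diff[of F2 f F1] by (simp add: add.commute inf_commute)
      have "dist (sum f F1) (sum f F2) = norm (sum f (F1 - F2) - sum f (F2 - F1))"
        unfolding dist_norm e1 e2 by (simp add: algebra_simps)
      also have "\<dots> \<le> norm (sum f (F1 - F2)) + norm (sum f (F2 - F1))" by (rule norm_triangle_ineq4)
      also have "\<dots> < e/2 + e/2"
        apply (intro add_strict_mono F0(3)) using that unfolding P_def by auto
      finally show ?thesis by simp
    qed
    ultimately show ?thesis by blast
  qed
  then have "cauchy_filter (filtermap (sum f) (finite_subsets_at_top A))"
    by (simp add: cauchy_filter_metric_filtermap)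
  moreover have "complete (UNIV::'b set)"
    by (meson Cauchy_convergent UNIV_I complete_def convergent_def)
  ultimately obtain L' where "(sum f \<longlongrightarrow> L') (finite_subsets_at_top A)"
    using complete_uniform[where S=UNIV] by (force simp add: filterlim_def)
  then show ?thesis
    using summable_on_def has_sum_def by blast
qed

lemma cs_alg:
  fixes a :: complex and r :: real and X :: complex
  assumes "r \<noteq> 0"
  shows "X - cnj (a / of_real r) * a - (a / of_real r) * cnj a + (a / of_real r) * cnj (a / of_real r) * of_real r
        = X - of_real ((cmod a)^2 / r)"
proof -
  have "a * cnj a = of_real ((cmod a)^2)" using complex_norm_square[of a] by simp
  then show ?thesis using assms by (simp add: field_simps)
qed

context complex_hilbert begin

subclass banach ..

end

lemma cinner_zero_left[simp]: "cinner 0 y = 0"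
  using cinner_add_left[of 0 0 y] by simp

lemma cinner_zero_right[simp]: "cinner x 0 = 0"
  using cinner_commute[of x 0] by simp

lemma cinner_add_right: "cinner x (y + z) = cinner x y + cinner x z"
  using cinner_commute[of x "y+z"] cinner_commute[of x y] cinner_commute[of x z] cinner_add_left[of y z x] by simp

lemma cinner_scaleC_right: "cinner x (scaleC a y) = cnj a * cinner x y"
  using cinner_commute[of x "scaleC a y"] cinner_commute[of x y] cinner_scaleC_left[of a y x] by simp

lemma cinner_minus_left: "cinner (- x) y = - cinner x y"
proof -
  have "cinner x y + cinner (-x) y = 0" using cinner_add_left[of x "-x" y] by simp
  from minus_unique[OF this] show ?thesis by simp
qed

lemma cinner_diff_left: "cinner (x - y) z = cinner x z - cinner y z"
  using cinner_add_left[of x "- y" z] by (simp add: cinner_minus_left)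

lemma cinner_minus_right: "cinner x (- y) = - cinner x y"
proof -
  have "cinner x y + cinner x (-y) = 0" using cinner_add_right[of x y "-y"] by simp
  from minus_unique[OF this] show ?thesis by simp
qed

lemma cinner_diff_right: "cinner x (y - z) = cinner x y - cinner x z"
  using cinner_add_right[of x y "- z"] by (simp add: cinner_minus_right)

lemma cinner_scaleR_left: "cinner (scaleR r x) y = complex_of_real r * cinner x y"
  by (simp add: scaleR_scaleC cinner_scaleC_left)

lemma cinner_sum_left: "cinner (sum g K) y = (\<Sum>i\<in>K. cinner (g i) y)"
  by (induction K rule: infinite_finite_induct) (auto simp: cinner_add_left)

lemma cinner_self: "cinner x x = complex_of_real ((norm x)^2)"
  using cinner_self_real[of x] cinner_self_nonneg[of x] norm_eq_sqrt_cinner[of x]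
  by (simp add: complex_eq_iff)

lemma Cauchy_Schwarz: "cmod (cinner x y) \<le> norm x * norm y"
proof (cases "y = 0")
  case True then show ?thesis by simp
next
  case False
  define a where "a = cinner x y"
  define r where "r = (norm y)^2"
  define c where "c = a / complex_of_real r"
  have yy: "cinner y y = complex_of_real r" unfolding r_def by (rule cinner_self)
  have ny: "norm y > 0" using False by simp
  then have r0: "r > 0" unfolding r_def by simp
  have "0 \<le> Re (cinner (x - scaleC c y) (x - scaleC c y))" by (rule cinner_self_nonneg)
  also have "cinner (x - scaleC c y) (x - scaleC c y) =
      cinner x x - cnj c * a - c * cnj a + c * cnj c * complex_of_real r"
    unfolding cinner_diff_left cinner_diff_right cinner_scaleC_left cinner_scaleC_right yy
      cinner_commute[of y x] a_def[symmetric]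
    by (simp add: algebra_simps)
  also have "\<dots> = cinner x x - complex_of_real ((cmod a)^2 / r)"
    unfolding c_def by (rule cs_alg) (use r0 in simp)
  finally have "(cmod a)^2 / r \<le> (norm x)^2"
    unfolding cinner_self[of x] by simp
  then have "(cmod a)^2 \<le> (norm x * norm y)^2"
    using r0 unfolding r_def by (simp add: field_simps power_mult_distrib)
  then show ?thesis unfolding a_def by (rule power2_le_imp_le) simp
qed

lemma bounded_linear_cinner_left: "bounded_linear (\<lambda>x::'a::complex_hilbert. cinner x y)"
proof (rule bounded_linear_intro[where K="norm y"])
  show "cinner (a + b) y = cinner a y + cinner b y" for a b by (simp add: cinner_add_left)
  show "cinner (r *\<^sub>R a) y = r *\<^sub>R cinner a y" for r a
    by (simp add: cinner_scaleR_left scaleR_conv_of_real)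
  show "norm (cinner x y) \<le> norm x * norm y" for x
    by (rule Cauchy_Schwarz)
qed

lemma frame_finite_le:
  assumes "parseval_frame I F" "finite K" "K \<subseteq> I"
  shows "(\<Sum>i\<in>K. (cmod (cinner g (F i)))^2) \<le> (norm g)^2"
proof -
  have "((\<lambda>i. (cmod (cinner g (F i)))^2) has_sum (norm g)^2) I"
    using assms(1) unfolding parseval_frame_def by blast
  then show ?thesis
    by (rule has_sum_mono_neutral[OF has_sum_finite[OF assms(2)]]) (use assms in auto)
qed

lemma synth_bound:
  assumes "parseval_frame I F" "finite K" "K \<subseteq> I"
  shows "(norm (\<Sum>i\<in>K. scaleC (d i) (F i)))^2 \<le> (\<Sum>i\<in>K. (cmod (d i))^2)"
proof -
  define g where "g = (\<Sum>i\<in>K. scaleC (d i) (F i))"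
  define D where "D = (\<Sum>i\<in>K. (cmod (d i))^2)"
  have "(norm g)^2 = Re (cinner g g)" by (simp add: cinner_self)
  also have "cinner g g = (\<Sum>i\<in>K. d i * cinner (F i) g)"
    unfolding g_def[of] by (simp add: cinner_sum_left cinner_scaleC_left)
  also have "Re \<dots> \<le> cmod \<dots>" by (rule complex_Re_le_cmod)
  also have "\<dots> \<le> (\<Sum>i\<in>K. cmod (d i) * cmod (cinner g (F i)))"
    by (rule order.trans[OF norm_sum]) (simp add: norm_mult cinner_commute[of "F _" g])
  finally have a: "(norm g)^2 \<le> (\<Sum>i\<in>K. cmod (d i) * cmod (cinner g (F i)))" .
  have "(\<Sum>i\<in>K. cmod (d i) * cmod (cinner g (F i)))^2 \<le> D * (\<Sum>i\<in>K. (cmod (cinner g (F i)))^2)"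
    unfolding D_def by (rule Cauchy_Schwarz_ineq_sum)
  also have "\<dots> \<le> D * (norm g)^2"
    by (rule mult_left_mono[OF frame_finite_le[OF assms]]) (simp add: D_def sum_nonneg)
  finally have b: "(\<Sum>i\<in>K. cmod (d i) * cmod (cinner g (F i)))^2 \<le> D * (norm g)^2" .
  have "((norm g)^2)^2 \<le> D * (norm g)^2"
  proof -
    have "((norm g)^2)^2 \<le> (\<Sum>i\<in>K. cmod (d i) * cmod (cinner g (F i)))^2"
      by (rule power_mono[OF a]) simp
    then show ?thesis using b by linarith
  qed
  then have "(norm g)^2 \<le> D"
  proof (cases "norm g = 0")
    case True then show ?thesis by (simp add: D_def sum_nonneg)
  next
    case False
    then have "(norm g)^2 > 0" by simp
    have h: "(norm g)^2 * (norm g)^2 \<le> D * (norm g)^2"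
      using \<open>((norm g)^2)^2 \<le> D * (norm g)^2\<close> by (simp only: power2_eq_square[of "(norm g)^2"])
    show ?thesis by (rule mult_right_le_imp_le[OF h]) (use \<open>(norm g)^2 > 0\<close> in simp)
  qed
  then show ?thesis unfolding g_def D_def .
qed

lemma synth_summable:
  assumes "parseval_frame I F" "K \<subseteq> I" "((\<lambda>i. (cmod (d i))^2) has_sum S) K"
  shows "(\<lambda>i. scaleC (d i) (F i)) summable_on K"
proof (rule cauchy_summable)
  fix e :: real assume "e > 0"
  then have "e^2 > 0" by simp
  from assms(3) have "\<forall>\<^sub>F X in finite_subsets_at_top K. dist (\<Sum>i\<in>X. (cmod (d i))^2) S < e^2"
    unfolding has_sum_def using tendstoD \<open>e^2 > 0\<close> by blast
  then obtain F0 where F0: "finite F0" "F0 \<subseteq> K" "dist (\<Sum>i\<in>F0. (cmod (d i))^2) S < e^2"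
    unfolding eventually_finite_subsets_at_top by blast
  have "norm (\<Sum>i\<in>G. scaleC (d i) (F i)) < e" if G: "finite G" "G \<subseteq> K - F0" for G
  proof -
    have "(\<Sum>i\<in>G \<union> F0. (cmod (d i))^2) \<le> S"
      by (rule has_sum_mono_neutral[OF has_sum_finite assms(3)]) (use G F0 in auto)
    moreover have "(\<Sum>i\<in>G \<union> F0. (cmod (d i))^2) = (\<Sum>i\<in>G. (cmod (d i))^2) + (\<Sum>i\<in>F0. (cmod (d i))^2)"
      by (rule sum.union_disjoint) (use G F0 in auto)
    ultimately have "(\<Sum>i\<in>G. (cmod (d i))^2) < e^2"
      using F0(3) unfolding dist_real_def by linarith
    moreover have GI: "G \<subseteq> I" using G assms(2) by auto
    have "(norm (\<Sum>i\<in>G. scaleC (d i) (F i)))^2 \<le> (\<Sum>i\<in>G. (cmod (d i))^2)"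
      by (rule synth_bound[OF assms(1) G(1) GI])
    ultimately have "(norm (\<Sum>i\<in>G. scaleC (d i) (F i)))^2 < e^2" by linarith
    from power2_less_imp_less[OF this] show ?thesis using \<open>e>0\<close> by simp
  qed
  then show "\<exists>F0. finite F0 \<and> F0 \<subseteq> K \<and> (\<forall>G. finite G \<and> G \<subseteq> K - F0 \<longrightarrow> norm (\<Sum>i\<in>G. scaleC (d i) (F i)) < e)"
    using F0 by blast
qed


lemma coeff_summable:
  assumes "parseval_frame I F" "K \<subseteq> I"
  shows "(\<lambda>i. (cmod (cinner f (F i)))^2) summable_on K"
proof -
  have "((\<lambda>i. (cmod (cinner f (F i)))^2) has_sum (norm f)^2) I"
    using assms(1) unfolding parseval_frame_def by blast
  then have "(\<lambda>i. (cmod (cinner f (F i)))^2) summable_on I" unfolding summable_on_def by blast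
  then show ?thesis by (rule summable_on_subset_banach) (rule assms(2))
qed

lemma synth_summable_f:
  assumes "parseval_frame I F" "K \<subseteq> I"
  shows "(\<lambda>i. scaleC (cinner f (F i)) (F i)) summable_on K"
  by (rule synth_summable[OF assms has_sum_infsum[OF coeff_summable[OF assms]]])

lemma synth_cinner_f:
  assumes "parseval_frame I F" "K \<subseteq> I"
  shows "cinner (\<Sum>\<^sub>\<infinity>i\<in>K. scaleC (cinner f (F i)) (F i)) f
         = complex_of_real (\<Sum>\<^sub>\<infinity>i\<in>K. (cmod (cinner f (F i)))^2)"
proof -
  have h1: "((\<lambda>i. cinner (scaleC (cinner f (F i)) (F i)) f) has_sum
      cinner (\<Sum>\<^sub>\<infinity>i\<in>K. scaleC (cinner f (F i)) (F i)) f) K"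
    by (rule has_sum_bounded_linear[OF bounded_linear_cinner_left has_sum_infsum[OF synth_summable_f[OF assms]]])
  have h2: "((\<lambda>i. complex_of_real ((cmod (cinner f (F i)))^2)) has_sum
      complex_of_real (\<Sum>\<^sub>\<infinity>i\<in>K. (cmod (cinner f (F i)))^2)) K"
    by (rule has_sum_bounded_linear[OF bounded_linear_of_real has_sum_infsum[OF coeff_summable[OF assms]]])
  have eq: "cinner (scaleC (cinner f (F i)) (F i)) f = complex_of_real ((cmod (cinner f (F i)))^2)" for i
    using complex_norm_square[of "cinner f (F i)"] cinner_commute[of "F i" f]
    by (simp add: cinner_scaleC_left)
  show ?thesis using h1 h2 unfolding eq by (rule has_sum_unique)
qed

lemma synth_total:
  assumes "parseval_frame I F"
  shows "(\<Sum>\<^sub>\<infinity>i\<in>I. scaleC (cinner f (F i)) (F i)) = f"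
proof -
  define g where "g = (\<Sum>\<^sub>\<infinity>i\<in>I. scaleC (cinner f (F i)) (F i))"
  have fr: "((\<lambda>i. (cmod (cinner f (F i)))^2) has_sum (norm f)^2) I"
    using assms(1) unfolding parseval_frame_def by blast
  have gf: "cinner g f = complex_of_real ((norm f)^2)"
    unfolding g_def synth_cinner_f[OF assms order.refl] infsumI[OF fr] ..
  have fg: "cinner f g = complex_of_real ((norm f)^2)"
    using gf cinner_commute[of f g] by simp
  have lim: "((\<lambda>X. sum (\<lambda>i. scaleC (cinner f (F i)) (F i)) X) \<longlongrightarrow> g) (finite_subsets_at_top I)"
    using has_sum_infsum[OF synth_summable_f[OF assms order.refl]] unfolding g_def has_sum_def .
  have lim2: "((\<lambda>X. (norm (sum (\<lambda>i. scaleC (cinner f (F i)) (F i)) X))^2) \<longlongrightarrow> (norm g)^2) (finite_subsets_at_top I)"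
    by (intro tendsto_intros lim)
  have ev: "eventually (\<lambda>X. (norm f)^2 \<ge> (norm (sum (\<lambda>i. scaleC (cinner f (F i)) (F i)) X))^2) (finite_subsets_at_top I)"
  proof (rule eventually_finite_subsets_at_top_weakI)
    fix X assume X: "finite X" "X \<subseteq> I"
    have "(norm (sum (\<lambda>i. scaleC (cinner f (F i)) (F i)) X))^2 \<le> (\<Sum>i\<in>X. (cmod (cinner f (F i)))^2)"
      by (rule synth_bound[OF assms X])
    also have "\<dots> \<le> (norm f)^2" by (rule frame_finite_le[OF assms X])
    finally show "(norm f)^2 \<ge> (norm (sum (\<lambda>i. scaleC (cinner f (F i)) (F i)) X))^2" .
  qed
  have gle: "(norm g)^2 \<le> (norm f)^2"
    by (rule tendsto_upperbound[OF lim2 ev finite_subsets_at_top_neq_bot])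
  have "(norm (g - f))^2 = Re (cinner (g - f) (g - f))" by (simp add: cinner_self)
  also have "cinner (g - f) (g - f) = cinner g g - cinner g f - cinner f g + cinner f f"
    by (simp add: cinner_diff_left cinner_diff_right)
  also have "Re \<dots> = (norm g)^2 - (norm f)^2"
    unfolding gf fg cinner_self[of g] cinner_self[of f] by simp
  finally have "(norm (g - f))^2 \<le> 0" using gle by linarith
  then have "g - f = 0" by simp
  then show ?thesis unfolding g_def by simp
qed

theorem theorem3p2:
  fixes I :: "'i set" and F :: "'i \<Rightarrow> 'a::complex_hilbert"
    and J :: "'i set" and f :: 'a
  assumes "parseval_frame I F"
    and "J \<subseteq> I"
  shows "(\<Sum>\<^sub>\<infinity>i\<in>J. (cmod (cinner f (F i)))^2)
           - (norm (\<Sum>\<^sub>\<infinity>i\<in>J. scaleC (cinner f (F i)) (F i)))^2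
       = (\<Sum>\<^sub>\<infinity>i\<in>I - J. (cmod (cinner f (F i)))^2)
           - (norm (\<Sum>\<^sub>\<infinity>i\<in>I - J. scaleC (cinner f (F i)) (F i)))^2"
proof -
  define A where "A = (\<Sum>\<^sub>\<infinity>i\<in>J. scaleC (cinner f (F i)) (F i))"
  define B where "B = (\<Sum>\<^sub>\<infinity>i\<in>I - J. scaleC (cinner f (F i)) (F i))"
  have IJ: "I - J \<subseteq> I" by auto
  have "((\<lambda>i. scaleC (cinner f (F i)) (F i)) has_sum (A + B)) (J \<union> (I - J))"
    unfolding A_def B_def
    by (rule has_sum_Un_disjoint[OF has_sum_infsum[OF synth_summable_f[OF assms]]
          has_sum_infsum[OF synth_summable_f[OF assms(1) IJ]]]) auto
  moreover have "J \<union> (I - J) = I" using assms(2) by auto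
  ultimately have "A + B = f"
    using synth_total[OF assms(1), of f] infsumI by metis
  then have Bf: "B = f - A" and Af: "A = f - B" by (auto simp: algebra_simps)
  have "(\<Sum>\<^sub>\<infinity>i\<in>J. (cmod (cinner f (F i)))^2) - (norm A)^2 = Re (cinner A f) - Re (cinner A A)"
    unfolding A_def synth_cinner_f[OF assms] by (simp add: cinner_self)
  also have "\<dots> = Re (cinner A B)" unfolding Bf by (simp add: cinner_diff_right)
  also have "\<dots> = Re (cinner B A)" using cinner_commute[of A B] by simp
  also have "\<dots> = Re (cinner B f) - Re (cinner B B)" unfolding Af by (simp add: cinner_diff_right)
  also have "\<dots> = (\<Sum>\<^sub>\<infinity>i\<in>I - J. (cmod (cinner f (F i)))^2) - (norm B)^2"
    unfolding B_def synth_cinner_f[OF assms(1) IJ] by (simp add: cinner_self)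
  finally show ?thesis unfolding A_def B_def .
qed

end
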